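(* Let $m\ge2$ and let $U\subset\mathbb R^m$ be open with $|U|=+\infty$. Then $U$ has infinite anexometer, i.e. $\|\chi_U\|_{BF(U)}=+\infty$.
   Context: $\mathcal{DM}_\infty(U)=\{u\in L_\infty(U;\mathbb R^m):\operatorname{div}u\text{ is a finite signed Radon measure on }U\}$ and $\|\chi_U\|_{BF(U)}=\sup\{\operatorname{div}u(U):u\in\mathcal{DM}_\infty(U),\|u\|_\infty\le1\}$. *)

theory Defs
  imports "HOL-Analysis.Analysis"
begin

fun dderivs :: "'a::euclidean_space list \<Rightarrow> ('a \<Rightarrow> real) \<Rightarrow> 'a \<Rightarrow> real" where
  "dderivs [] f = f"
| "dderivs (v # vs) f = (\<lambda>x. frechet_derivative (dderivs vs f) (at x) v)"

definition smooth_fun :: "('a::euclidean_space \<Rightarrow> real) \<Rightarrow> bool" where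
  "smooth_fun f \<longleftrightarrow> (\<forall>vs x. dderivs vs f differentiable (at x))"

text \<open>Test functions C_c^infinity(U) (extended by zero outside U).\<close>
definition test_fun :: "'a::euclidean_space set \<Rightarrow> ('a \<Rightarrow> real) \<Rightarrow> bool" where
  "test_fun U \<phi> \<longleftrightarrow> smooth_fun \<phi> \<and> compact (closure {x. \<phi> x \<noteq> 0})
      \<and> closure {x. \<phi> x \<noteq> 0} \<subseteq> U"

text \<open>Finite (hence Radon) positive Borel measure on the open set U.\<close>
definition fin_borel_on :: "'a::euclidean_space set \<Rightarrow> 'a measure \<Rightarrow> bool" where
  "fin_borel_on U \<mu> \<longleftrightarrow> sets \<mu> = sets (restrict_space borel U) \<and> finite_measure \<mu>"

text \<open>u \<in> L_\<infinity>(U;R^m) and div u is the finite signed Radon measure mu_p - mu_n on U,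
  in the sense of distributions.\<close>
definition div_measure :: "'a::euclidean_space set \<Rightarrow> ('a \<Rightarrow> 'a) \<Rightarrow> 'a measure \<Rightarrow> 'a measure \<Rightarrow> bool" where
  "div_measure U u \<mu>p \<mu>n \<longleftrightarrow>
     u \<in> borel_measurable (restrict_space lebesgue U)
   \<and> (\<exists>C. AE x in restrict_space lebesgue U. norm (u x) \<le> C)
   \<and> fin_borel_on U \<mu>p \<and> fin_borel_on U \<mu>n
   \<and> (\<forall>\<phi>. test_fun U \<phi> \<longrightarrow>
        (LINT x:U|lebesgue. frechet_derivative \<phi> (at x) (u x))
          = - ((LINT x|\<mu>p. \<phi> x) - (LINT x|\<mu>n. \<phi> x)))"

definition DM_inf :: "'a::euclidean_space set \<Rightarrow> ('a \<Rightarrow> 'a) set" where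
  "DM_inf U = {u. \<exists>\<mu>p \<mu>n. div_measure U u \<mu>p \<mu>n}"

definition anexometer :: "'a::euclidean_space set \<Rightarrow> ereal" where
  "anexometer U = Sup {ereal (measure \<mu>p U - measure \<mu>n U) | u \<mu>p \<mu>n.
       div_measure U u \<mu>p \<mu>n \<and> (AE x in restrict_space lebesgue U. norm (u x) \<le> 1)}"

end

theory Submission
  imports Defs
begin

lemma deriv_split:
  fixes f :: "real \<Rightarrow> real"
  assumes "(f has_real_derivative D) (at c within {..c})"
      and "(f has_real_derivative D) (at c within {c..})"
  shows "(f has_real_derivative D) (at c)"
proof -
  have e: "(UNIV::real set) = {..c} \<union> {c..}" by auto
  show ?thesis using assms unfolding has_field_derivative_iff
    by (subst e, subst at_within_union) (rule filterlim_sup)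
qed

definition clamp01 :: "real \<Rightarrow> real" where "clamp01 s = max 0 (min 1 s)"
definition GG :: "real \<Rightarrow> real" where "GG s = - cos (pi * clamp01 s)"
definition GD :: "real \<Rightarrow> real" where "GD s = pi * sin (pi * clamp01 s)"

lemma GG_deriv: "(GG has_real_derivative GD s) (at s)"
proof -
  have dc: "((\<lambda>s. - cos (pi * s)) has_real_derivative pi * sin (pi * s)) (at s within S)" for s S
    by (auto intro!: derivative_eq_intros)
  have lo: "(GG has_real_derivative 0) (at c within {..0})" if "c \<le> 0" for c
    by (rule has_field_derivative_transform_within[where f="\<lambda>_. -1", OF _ zero_less_one])
       (use that in \<open>auto simp: GG_def clamp01_def\<close>)
  have hi: "(GG has_real_derivative 0) (at c within {1..})" if "c \<ge> 1" for c
    by (rule has_field_derivative_transform_within[where f="\<lambda>_. 1", OF _ zero_less_one])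
       (use that in \<open>auto simp: GG_def clamp01_def\<close>)
  have mid: "(GG has_real_derivative pi * sin (pi * c)) (at c within {0..1})" if "0 \<le> c" "c \<le> 1" for c
    by (rule has_field_derivative_transform_within[OF dc zero_less_one])
       (use that in \<open>auto simp: GG_def clamp01_def\<close>)
  consider "s < 0" | "s = 0" | "0 < s \<and> s < 1" | "s = 1" | "s > 1" by linarith
  then show ?thesis
  proof cases
    case 1
    have "(GG has_real_derivative 0) (at s)"
      by (rule has_field_derivative_transform_within_open[OF DERIV_const[of "-1"], of "{..<0}"])
         (use 1 in \<open>auto simp: GG_def clamp01_def\<close>)
    then show ?thesis using 1 by (simp add: GD_def clamp01_def)
  next
    case 2
    have a: "(GG has_real_derivative 0) (at 0 within {0..})"
      by (rule has_field_derivative_transform_within[OF dc[of 0 "{0..}", simplified] zero_less_one])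
         (auto simp: GG_def clamp01_def dist_real_def)
    show ?thesis using 2 deriv_split[OF lo[of 0] a] by (simp add: GD_def clamp01_def)
  next
    case 3
    have "(GG has_real_derivative pi * sin (pi * s)) (at s)"
      by (rule has_field_derivative_transform_within_open[OF dc[of s UNIV, simplified], of "{0<..<1}"])
         (use 3 in \<open>auto simp: GG_def clamp01_def\<close>)
    then show ?thesis using 3 by (simp add: GD_def clamp01_def)
  next
    case 4
    have a: "(GG has_real_derivative 0) (at 1 within {..1})"
      by (rule has_field_derivative_transform_within[OF dc[of 1 "{..1}", simplified] zero_less_one])
         (auto simp: GG_def clamp01_def dist_real_def)
    show ?thesis using 4 deriv_split[OF a hi[of 1]] by (simp add: GD_def clamp01_def)
  next
    case 5
    have "(GG has_real_derivative 0) (at s)"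
      by (rule has_field_derivative_transform_within_open[OF DERIV_const[of 1], of "{1<..}"])
         (use 5 in \<open>auto simp: GG_def clamp01_def\<close>)
    then show ?thesis using 5 by (simp add: GD_def clamp01_def)
  qed
qed

fun LWK :: "nat \<Rightarrow> real" where
  "LWK 0 = 1"
| "LWK (Suc n) = (if n < 2 then 1 else LWK n * real n ^ n)"

lemma LWK_pos: "LWK n > 0"
  by (induction n) auto

lemma LW_base:
  fixes S :: "('i \<Rightarrow> int) set"
  assumes "i \<noteq> j" "finite S"
    and "card ((\<lambda>z. z(i:=0)) ` S) \<le> P" "card ((\<lambda>z. z(j:=0)) ` S) \<le> P"
  shows "card S \<le> P * P"
proof -
  have "inj_on (\<lambda>z. (z(i:=0), z(j:=0))) S"
  proof (rule inj_onI)
    fix z w assume "(z(i:=0), z(j:=0)) = (w(i:=0), w(j:=0))"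
    then have a: "z(i:=0) = w(i:=0)" and b: "z(j:=0) = w(j:=0)" by auto
    show "z = w"
    proof
      fix c show "z c = w c"
      proof (cases "c = i")
        case True then show ?thesis using fun_cong[OF b, of c] assms(1) by auto
      next
        case False then show ?thesis using fun_cong[OF a, of c] by auto
      qed
    qed
  qed
  then have "card S \<le> card ((\<lambda>z. z(i:=0)) ` S \<times> (\<lambda>z. z(j:=0)) ` S)"
    by (intro card_inj_on_le) (auto simp: assms)
  also have "\<dots> \<le> P * P" using assms by (simp add: card_cartesian_product mult_le_mono)
  finally show ?thesis .
qed

lemma LW_aux:
  fixes x a c :: real and n :: nat
  assumes "n \<ge> 1" "0 \<le> x" "0 \<le> a" "x \<le> P" "x ^ (n - 1) \<le> L * a ^ n" "0 \<le> L"
  shows "x \<le> root n (P * L) * a"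
proof -
  have P0: "0 \<le> P" using assms by linarith
  have "x ^ n = x * x ^ (n - 1)" using assms(1) by (metis Suc_diff_1 less_le_trans power_Suc zero_less_one)
  also have "\<dots> \<le> P * (L * a ^ n)" using assms by (intro mult_mono) auto
  also have "\<dots> = (root n (P * L) * a) ^ n"
    using assms P0 by (simp add: power_mult_distrib real_root_pow_pos2)
  finally have "x ^ n \<le> (root n (P * L) * a) ^ n" .
  moreover obtain m where m: "n = Suc m" using assms(1) by (cases n) auto
  moreover have "0 \<le> root n (P * L) * a"
    using assms P0 by (intro mult_nonneg_nonneg real_root_ge_zero) auto
  ultimately show ?thesis using power_le_imp_le_base[of x m] by simp
qed

lemma LW:
  fixes S :: "('i \<Rightarrow> int) set"
  assumes "card I \<ge> 2" "finite I" "finite S" "\<forall>z\<in>S. \<forall>c. c \<notin> I \<longrightarrow> z c = 0"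
    and "\<forall>i\<in>I. card ((\<lambda>z. z(i:=0)) ` S) \<le> P"
  shows "real (card S) ^ (card I - 1) \<le> LWK (card I) * real P ^ card I"
  using assms
proof (induction "card I" arbitrary: I S P rule: nat_induct_at_least)
  case base
  then obtain i j where I: "I = {i, j}" "i \<noteq> j" by (metis card_2_iff)
  have "card S \<le> P * P"
    by (rule LW_base[OF I(2) \<open>finite S\<close>]) (use base I(1) in blast)+
  then have "real (card S) \<le> real P ^ 2" by (simp add: power2_eq_square flip: of_nat_mult)
  moreover have "LWK 2 = 1" by (simp add: numeral_2_eq_2)
  ultimately show ?case using base(1)[symmetric] by simp
next
  case (Suc n)
  have "I \<noteq> {}" using Suc.hyps(3) by (metis card.empty nat.distinct(1))
  then obtain j where j: "j \<in> I" by blast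
  define I' where "I' = I - {j}"
  have cI': "card I' = n" using Suc.hyps(3) j Suc.prems(1) by (simp add: I'_def)
  have finI': "finite I'" using Suc.prems(1) by (simp add: I'_def)
  define K where "K = (\<lambda>z. z j) ` S"
  define Sk where "Sk k = (\<lambda>z. z(j:=0)) ` {z\<in>S. z j = k}" for k
  define pr where "pr i T = (\<lambda>z::'i\<Rightarrow>int. z(i:=0)) ` T" for i T
  define a where "a k = (\<Sum>i\<in>I'. card (pr i (Sk k)))" for k
  have finK: "finite K" using Suc.prems by (simp add: K_def)
  have finSk: "finite (Sk k)" for k using Suc.prems by (simp add: Sk_def)
  have Sk_ext: "\<forall>z\<in>Sk k. \<forall>c. c \<notin> I' \<longrightarrow> z c = 0" for k
    using Suc.prems(3) by (auto simp: Sk_def I'_def)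
  have L0: "0 \<le> LWK n" using LWK_pos[of n] by simp
  define c where "c = root n (real P * LWK n)"
  have c0: "0 \<le> c" unfolding c_def using L0 by (simp add: real_root_ge_zero)
  have Sk_le: "real (card (Sk k)) \<le> c * a k" for k
  proof -
    have IH: "real (card (Sk k)) ^ (card I' - 1) \<le> LWK (card I') * real (a k) ^ card I'"
      by (rule Suc.hyps(2)[OF cI'[symmetric] finI' finSk Sk_ext])
         (use Suc.hyps(1) cI' in \<open>auto simp: a_def pr_def intro!: member_le_sum finI'\<close>)
    have "card (Sk k) \<le> card (pr j S)"
      by (intro card_mono) (auto simp: Sk_def pr_def Suc.prems)
    also have "\<dots> \<le> P" using Suc.prems(4) j by (simp add: pr_def)
    finally have "card (Sk k) \<le> P" .
    then show ?thesis unfolding c_def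
      by (intro LW_aux) (use IH cI' Suc.hyps(1) L0 in auto)
  qed
  have cardS: "card S \<le> (\<Sum>k\<in>K. card (Sk k))"
  proof -
    have "inj_on (\<lambda>z. (z j, z(j:=0))) S"
    proof (rule inj_onI)
      fix z w assume "(z j, z(j:=0)) = (w j, w(j:=0))"
      then have e1: "z j = w j" and e2: "z(j:=0) = w(j:=0)" by auto
      show "z = w"
      proof
        fix c show "z c = w c" using e1 fun_cong[OF e2, of c] by (cases "c = j") auto
      qed
    qed
    moreover have "(\<lambda>z. (z j, z(j:=0))) ` S \<subseteq> Sigma K Sk" by (auto simp: K_def Sk_def)
    moreover have "finite (Sigma K Sk)" using finK finSk by blast
    ultimately have "card S \<le> card (Sigma K Sk)"
      by (intro card_inj_on_le)
    then show ?thesis by (simp add: card_SigmaI finK finSk)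
  qed
  have proj_le: "(\<Sum>k\<in>K. card (pr i (Sk k))) \<le> P" if i: "i \<in> I'" for i
  proof -
    have ij: "i \<noteq> j" using i by (simp add: I'_def)
    have "inj_on (\<lambda>(k, w). w(j:=k)) (Sigma K (\<lambda>k. pr i (Sk k)))"
    proof (rule inj_onI, clarify)
      fix k w k' w'
      assume A: "k \<in> K" "w \<in> pr i (Sk k)" "k' \<in> K" "w' \<in> pr i (Sk k')" and e: "w(j := k) = w'(j := k')"
      have wj: "w j = 0" "w' j = 0" using A ij by (auto simp: pr_def Sk_def)
      have "k = k'" using fun_cong[OF e, of j] by simp
      moreover have "w = w'"
      proof
        fix c show "w c = w' c" using wj fun_cong[OF e, of c] by (cases "c = j") auto
      qed
      ultimately show "k = k' \<and> w = w'" by simp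
    qed
    moreover have "(\<lambda>(k, w). w(j:=k)) ` (Sigma K (\<lambda>k. pr i (Sk k))) \<subseteq> pr i S"
    proof clarify
      fix k w assume "k \<in> K" "w \<in> pr i (Sk k)"
      then obtain z where z: "z \<in> S" "z j = k" "w = (z(j:=0))(i:=0)" by (auto simp: pr_def Sk_def)
      have "w(j:=k) = z(i:=0)" using z ij by (auto simp: fun_eq_iff)
      then show "w(j:=k) \<in> pr i S" using z by (auto simp: pr_def)
    qed
    ultimately have "card (Sigma K (\<lambda>k. pr i (Sk k))) \<le> card (pr i S)"
      by (intro card_inj_on_le) (auto simp: pr_def Suc.prems)
    also have "\<dots> \<le> P" using Suc.prems(4) i by (simp add: pr_def I'_def)
    finally show ?thesis by (simp add: card_SigmaI finK finSk pr_def)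
  qed
  have suma: "(\<Sum>k\<in>K. a k) \<le> n * P"
  proof -
    have "(\<Sum>k\<in>K. a k) = (\<Sum>i\<in>I'. \<Sum>k\<in>K. card (pr i (Sk k)))"
      unfolding a_def by (rule sum.swap)
    also have "\<dots> \<le> (\<Sum>i\<in>I'. P)" by (intro sum_mono proj_le)
    finally show ?thesis using cI' by simp
  qed
  have "real (card S) \<le> (\<Sum>k\<in>K. real (card (Sk k)))" using cardS by (simp flip: of_nat_sum)
  also have "\<dots> \<le> (\<Sum>k\<in>K. c * a k)" by (intro sum_mono Sk_le)
  also have "\<dots> = c * (\<Sum>k\<in>K. a k)" by (simp add: sum_distrib_left)
  also have "\<dots> \<le> c * (n * P)" using suma c0 by (intro mult_left_mono) (simp_all flip: of_nat_sum of_nat_mult)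
  finally have le: "real (card S) \<le> c * (n * P)" .
  have n1: "n \<ge> 1" using Suc.hyps(1) by simp
  have "real (card S) ^ n \<le> (c * (n * P)) ^ n" by (intro power_mono le) simp
  also have "\<dots> = c ^ n * (real n ^ n * real P ^ n)" by (simp add: power_mult_distrib)
  also have "c ^ n = real P * LWK n" unfolding c_def using n1 L0 by (simp add: real_root_pow_pos2)
  finally have "real (card S) ^ n \<le> real P * LWK n * (real n ^ n * real P ^ n)" .
  also have "\<dots> = LWK (Suc n) * real P ^ Suc n" using Suc.hyps(1) by simp
  finally show ?case using Suc.hyps(3)[symmetric] by simp
qed

lemma test_fun_diff:
  assumes "test_fun U \<phi>"
  shows "(\<phi> has_derivative frechet_derivative \<phi> (at x)) (at x)"
proof -
  have "dderivs [] \<phi> differentiable (at x)" using assms unfolding test_fun_def smooth_fun_def by blast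
  then show ?thesis by (simp add: frechet_derivative_works)
qed

lemma test_fun_cont: "test_fun U \<phi> \<Longrightarrow> continuous_on UNIV \<phi>"
  by (metis test_fun_diff continuous_at_imp_continuous_on has_derivative_continuous)

lemma test_fun_dcont:
  assumes "test_fun U \<phi>"
  shows "continuous_on UNIV (\<lambda>x. frechet_derivative \<phi> (at x) v)"
proof -
  have "dderivs [v] \<phi> differentiable (at x)" for x
    using assms unfolding test_fun_def smooth_fun_def by blast
  then have "isCont (dderivs [v] \<phi>) x" for x by (simp add: differentiable_imp_continuous_within)
  then show ?thesis by (simp add: continuous_at_imp_continuous_on)
qed

lemma test_fun_zero:
  assumes "test_fun U \<phi>" "x \<notin> closure {x. \<phi> x \<noteq> 0}"
  shows "\<phi> x = 0" "frechet_derivative \<phi> (at x) = (\<lambda>_. 0)"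
proof -
  have z: "\<phi> y = 0" if "y \<notin> closure {x. \<phi> x \<noteq> 0}" for y
    using that closure_subset[of "{x. \<phi> x \<noteq> 0}"] by auto
  show "\<phi> x = 0" using z assms(2) .
  have "((\<lambda>_. 0) has_derivative (\<lambda>_. 0)) (at x)" by simp
  then have "(\<phi> has_derivative (\<lambda>_. 0)) (at x)"
  proof (rule has_derivative_transform_within_open[where s="- closure {x. \<phi> x \<noteq> 0}"])
    show "open (- closure {x. \<phi> x \<noteq> 0})" by auto
    show "x \<in> - closure {x. \<phi> x \<noteq> 0}" using assms(2) by simp
    fix y assume "y \<in> - closure {x. \<phi> x \<noteq> 0}"
    then have "y \<notin> closure {x. \<phi> x \<noteq> 0}" by blast
    from z[OF this] show "0 = \<phi> y" by simp
  qed
  then show "frechet_derivative \<phi> (at x) = (\<lambda>_. 0)" by (rule frechet_derivative_at[symmetric])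
qed

lemma test_fun_bounded:
  assumes "test_fun U \<phi>"
  shows "\<exists>M. \<forall>x. \<bar>\<phi> x\<bar> \<le> M" "\<exists>M. \<forall>x. \<bar>frechet_derivative \<phi> (at x) v\<bar> \<le> M"
proof -
  define K where "K = closure {x. \<phi> x \<noteq> 0}"
  have K: "compact K" using assms by (simp add: K_def test_fun_def)
  have gen: "\<exists>M. \<forall>x. \<bar>g x\<bar> \<le> M" if "continuous_on UNIV g" "\<And>x. x \<notin> K \<Longrightarrow> g x = 0" for g :: "'a \<Rightarrow> real"
  proof -
    have "compact (g ` K)" by (rule compact_continuous_image[OF continuous_on_subset[OF that(1)] K]) auto
    then obtain B where B: "\<forall>y\<in>g ` K. norm y \<le> B" using compact_imp_bounded bounded_iff by metis
    show ?thesis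
    proof (intro exI allI)
      fix x show "\<bar>g x\<bar> \<le> max B 0"
      proof (cases "x \<in> K")
        case True then have "norm (g x) \<le> B" using B by blast
        then show ?thesis by simp
      next
        case False then show ?thesis using that(2) by simp
      qed
    qed
  qed
  show "\<exists>M. \<forall>x. \<bar>\<phi> x\<bar> \<le> M"
    by (rule gen[OF test_fun_cont[OF assms]]) (unfold K_def, erule test_fun_zero(1)[OF assms])
  show "\<exists>M. \<forall>x. \<bar>frechet_derivative \<phi> (at x) v\<bar> \<le> M"
    by (rule gen[OF test_fun_dcont[OF assms]]) (unfold K_def, drule test_fun_zero(2)[OF assms], simp)
qed

lemma test_fun_line_deriv:
  assumes "test_fun U \<phi>"
  shows "((\<lambda>s. \<phi> (x + s *\<^sub>R b)) has_real_derivative frechet_derivative \<phi> (at (x + t *\<^sub>R b)) b) (at t)"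
proof -
  let ?D = "frechet_derivative \<phi> (at (x + t *\<^sub>R b))"
  have lin: "linear ?D" using test_fun_diff[OF assms] has_derivative_linear by blast
  have "((\<lambda>s. x + s *\<^sub>R b) has_derivative (\<lambda>h. h *\<^sub>R b)) (at t)"
    by (auto intro!: derivative_eq_intros)
  from has_derivative_compose[OF this test_fun_diff[OF assms]]
  have A: "((\<lambda>s. \<phi> (x + s *\<^sub>R b)) has_derivative (\<lambda>h. ?D (h *\<^sub>R b))) (at t)" by (simp add: o_def)
  have B: "(\<lambda>h. ?D (h *\<^sub>R b)) = (*) (?D b)"
  proof
    fix h show "?D (h *\<^sub>R b) = ?D b * h" using linear_scale[OF lin, of h b] by (simp add: mult.commute)
  qed
  have C: "((\<lambda>s. \<phi> (x + s *\<^sub>R b)) has_derivative (*) (?D b)) (at t)"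
    by (rule has_derivative_eq_rhs[OF A B])
  show ?thesis unfolding has_field_derivative_def by (rule C)
qed

lemma integrable_bdd_cpt:
  fixes h :: "'a::euclidean_space \<Rightarrow> real"
  assumes "h \<in> borel_measurable borel" "compact K" "\<And>x. \<bar>h x\<bar> \<le> B * indicator K x"
  shows "integrable lborel h"
proof -
  have "K \<in> sets lborel" using assms(2) by (simp add: compact_imp_closed borel_closed)
  then have i1: "integrable lborel (\<lambda>x. B * indicator K x :: real)"
    using emeasure_compact_finite[OF assms(2)] by (intro integrable_mult_right integrable_real_indicator) auto
  have ae: "AE x in lborel. norm (h x) \<le> norm (B * indicator K x :: real)"
  proof (rule AE_I2)
    fix x have "\<bar>h x\<bar> \<le> B * indicator K x" by (rule assms(3))
    also have "\<dots> \<le> \<bar>B * indicator K x\<bar>" by (rule abs_ge_self)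
    finally show "norm (h x) \<le> norm (B * indicator K x :: real)" by simp
  qed
  have hm: "h \<in> borel_measurable lborel" using assms(1) by simp
  show ?thesis using Bochner_Integration.integrable_bound[OF i1 hm ae] .
qed

lemma integral_translate:
  fixes g :: "'a::euclidean_space \<Rightarrow> real"
  assumes "g \<in> borel_measurable borel"
  shows "(\<integral>x. g (c + x) \<partial>lborel) = (\<integral>x. g x \<partial>lborel)"
proof -
  have "(\<integral>x. g x \<partial>lborel) = (\<integral>x. g x \<partial>(distr lborel borel ((+) c)))" by (simp add: lborel_distr_plus)
  also have "\<dots> = (\<integral>x. g (c + x) \<partial>lborel)" by (rule integral_distr) (use assms in auto)
  finally show ?thesis by simp
qed

lemma ibp:
  fixes f d :: "'a::euclidean_space \<Rightarrow> real" and b :: 'a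
  assumes phi: "test_fun U \<phi>" and b: "norm b = 1"
    and fm: "f \<in> borel_measurable borel" and dm: "d \<in> borel_measurable borel"
    and fb: "\<And>x. \<bar>f x\<bar> \<le> Bf" and db: "\<And>x. \<bar>d x\<bar> \<le> Bd"
    and fd: "\<And>x t. ((\<lambda>s. f (x + s *\<^sub>R b)) has_real_derivative d (x + t *\<^sub>R b)) (at t)"
  shows "(\<integral>x. f x * frechet_derivative \<phi> (at x) b \<partial>lborel) = - (\<integral>x. \<phi> x * d x \<partial>lborel)"
proof -
  define K where "K = closure {x. \<phi> x \<noteq> 0}"
  have K: "compact K" using phi by (simp add: K_def test_fun_def)
  define K1 where "K1 = {x + y | x y. x \<in> K \<and> y \<in> cball (0::'a) 1}"
  have K1: "compact K1" unfolding K1_def by (intro compact_sums K compact_cball)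
  have KK1: "K \<subseteq> K1" unfolding K1_def by force
  obtain M\<phi> where M\<phi>: "\<And>x. \<bar>\<phi> x\<bar> \<le> M\<phi>" using test_fun_bounded(1)[OF phi] by blast
  obtain Md where Md: "\<And>x. \<bar>frechet_derivative \<phi> (at x) b\<bar> \<le> Md" using test_fun_bounded(2)[OF phi] by blast
  define Dp where "Dp x = frechet_derivative \<phi> (at x) b" for x
  have z\<phi>: "\<phi> x = 0" "Dp x = 0" if "x \<notin> K" for x
    using test_fun_zero[OF phi, of x] that by (simp_all add: K_def Dp_def)
  define g where "g x = \<phi> x * f x" for x
  define gd where "gd x = Dp x * f x + \<phi> x * d x" for x
  define C where "C = Md * Bf + M\<phi> * Bd"
  have Bf0: "0 \<le> Bf" using fb[of 0] by linarith
  have Bd0: "0 \<le> Bd" using db[of 0] by linarith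
  have gdb: "\<bar>gd x\<bar> \<le> C" for x
  proof -
    have "\<bar>gd x\<bar> \<le> \<bar>Dp x\<bar> * \<bar>f x\<bar> + \<bar>\<phi> x\<bar> * \<bar>d x\<bar>"
      unfolding gd_def by (metis abs_mult abs_triangle_ineq)
    also have "\<dots> \<le> Md * Bf + M\<phi> * Bd"
      using Md[of x] M\<phi>[of x] fb[of x] db[of x] Bf0 Bd0
      by (intro add_mono mult_mono) (auto simp: Dp_def)
    finally show ?thesis by (simp add: C_def)
  qed
  have phim: "\<phi> \<in> borel_measurable borel" by (rule borel_measurable_continuous_onI[OF test_fun_cont[OF phi]])
  have Dpm: "Dp \<in> borel_measurable borel"
    unfolding Dp_def by (rule borel_measurable_continuous_onI[OF test_fun_dcont[OF phi]])
  have gm: "g \<in> borel_measurable borel" unfolding g_def using phim fm by measurable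
  have gdm: "gd \<in> borel_measurable borel" unfolding gd_def using phim fm Dpm dm by measurable
  have gder: "((\<lambda>s. g (x + s *\<^sub>R b)) has_real_derivative gd (x + t *\<^sub>R b)) (at t)" for x t
  proof -
    have "((\<lambda>s. \<phi> (x + s *\<^sub>R b) * f (x + s *\<^sub>R b)) has_real_derivative
        Dp (x + t *\<^sub>R b) * f (x + t *\<^sub>R b) + d (x + t *\<^sub>R b) * \<phi> (x + t *\<^sub>R b)) (at t)"
      unfolding Dp_def by (rule DERIV_mult[OF test_fun_line_deriv[OF phi] fd])
    then show ?thesis by (simp add: g_def gd_def mult.commute)
  qed
  have mvt: "\<bar>g (x + h *\<^sub>R b) - g x\<bar> \<le> C * h" if "0 < h" for x h
  proof -
    have "\<exists>z>0. z < h \<and> g (x + h *\<^sub>R b) - g (x + 0 *\<^sub>R b) = (h - 0) * gd (x + z *\<^sub>R b)"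
      by (rule MVT2[OF that]) (rule gder)
    then obtain z where "g (x + h *\<^sub>R b) - g (x + 0 *\<^sub>R b) = (h - 0) * gd (x + z *\<^sub>R b)" by blast
    then have "\<bar>g (x + h *\<^sub>R b) - g x\<bar> = h * \<bar>gd (x + z *\<^sub>R b)\<bar>" using that by (simp add: abs_mult)
    also have "\<dots> \<le> h * C" using gdb that by (intro mult_left_mono) auto
    finally show ?thesis by (simp add: mult.commute)
  qed
  have out: "g x = 0 \<and> g (x + h *\<^sub>R b) = 0" if "x \<notin> K1" "0 < h" "h \<le> 1" for x h
  proof -
    have "x \<notin> K" using that KK1 by blast
    moreover have "x + h *\<^sub>R b \<notin> K"
    proof
      assume "x + h *\<^sub>R b \<in> K"
      moreover have "- (h *\<^sub>R b) \<in> cball 0 1" using that b by simp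
      ultimately have "(x + h *\<^sub>R b) + - (h *\<^sub>R b) \<in> K1" unfolding K1_def by blast
      then show False using that by simp
    qed
    ultimately show ?thesis by (simp add: g_def z\<phi>)
  qed
  define hh where "hh n = inverse (real (Suc n))" for n
  have hh0: "0 < hh n" "hh n \<le> 1" for n by (auto simp: hh_def field_simps)
  define q where "q n x = (g (x + hh n *\<^sub>R b) - g x) / hh n" for n x
  have qb: "\<bar>q n x\<bar> \<le> C * indicator K1 x" for n x
  proof (cases "x \<in> K1")
    case True
    have "\<bar>q n x\<bar> = \<bar>g (x + hh n *\<^sub>R b) - g x\<bar> / hh n" using hh0[of n] by (simp add: q_def)
    also have "\<dots> \<le> C * hh n / hh n" using mvt[OF hh0(1)] hh0[of n] by (intro divide_right_mono) auto
    also have "\<dots> = C" using hh0[of n] by simp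
    finally show ?thesis using True by simp
  next
    case False then show ?thesis using out[OF False hh0] by (simp add: q_def)
  qed
  have qm: "q n \<in> borel_measurable borel" for n unfolding q_def using gm by measurable
  have qlim: "(\<lambda>n. q n x) \<longlonglongrightarrow> gd x" for x
  proof -
    have "((\<lambda>y. (g (x + y *\<^sub>R b) - g (x + 0 *\<^sub>R b)) / (y - 0)) \<longlongrightarrow> gd (x + 0 *\<^sub>R b)) (at 0)"
      using gder[of x 0] unfolding has_field_derivative_iff .
    then have A: "((\<lambda>y. (g (x + y *\<^sub>R b) - g x) / y) \<longlongrightarrow> gd x) (at 0)" by simp
    have B: "filterlim hh (at 0) sequentially"
      unfolding filterlim_at hh_def using LIMSEQ_inverse_real_of_nat by auto
    show ?thesis using filterlim_compose[OF A B] by (simp add: q_def)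
  qed
  have gint: "integrable lborel g"
  proof (rule integrable_bdd_cpt[OF gm K, of "M\<phi> * Bf"])
    fix x show "\<bar>g x\<bar> \<le> M\<phi> * Bf * indicator K x"
    proof (cases "x \<in> K")
      case True then show ?thesis using M\<phi>[of x] fb[of x] Bf0 by (simp add: g_def abs_mult mult_mono)
    next
      case False then show ?thesis by (simp add: g_def z\<phi>)
    qed
  qed
  have qint0: "(\<integral>x. q n x \<partial>lborel) = 0" for n
  proof -
    have gbd: "\<bar>g y\<bar> \<le> M\<phi> * Bf" for y
      using M\<phi>[of y] fb[of y] Bf0 by (simp add: g_def abs_mult mult_mono)
    have i2: "integrable lborel (\<lambda>x. g (x + hh n *\<^sub>R b))"
    proof (rule integrable_bdd_cpt[OF _ K1, of _ "M\<phi> * Bf"])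
      show "(\<lambda>x. g (x + hh n *\<^sub>R b)) \<in> borel_measurable borel" using gm by measurable
      fix x show "\<bar>g (x + hh n *\<^sub>R b)\<bar> \<le> M\<phi> * Bf * indicator K1 x"
      proof (cases "x \<in> K1")
        case True then show ?thesis using gbd by simp
      next
        case False then show ?thesis using out[OF False hh0] by simp
      qed
    qed
    have "(\<integral>x. q n x \<partial>lborel) = ((\<integral>x. g (x + hh n *\<^sub>R b) \<partial>lborel) - (\<integral>x. g x \<partial>lborel)) / hh n"
      unfolding q_def using i2 gint by simp
    also have "(\<integral>x. g (x + hh n *\<^sub>R b) \<partial>lborel) = (\<integral>x. g x \<partial>lborel)"
      using integral_translate[OF gm, of "hh n *\<^sub>R b"] by (simp add: add.commute)
    finally show ?thesis by simp
  qed
  have "(\<lambda>n. \<integral>x. q n x \<partial>lborel) \<longlonglongrightarrow> (\<integral>x. gd x \<partial>lborel)"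
  proof (rule integral_dominated_convergence[where w="\<lambda>x. C * indicator K1 x"])
    show "gd \<in> borel_measurable lborel" using gdm by simp
    show "q n \<in> borel_measurable lborel" for n using qm by simp
    have "K1 \<in> sets lborel" using K1 by (simp add: compact_imp_closed borel_closed)
    then show "integrable lborel (\<lambda>x. C * indicator K1 x)"
      using emeasure_compact_finite[OF K1] by (intro integrable_mult_right integrable_real_indicator) auto
    show "AE x in lborel. (\<lambda>n. q n x) \<longlonglongrightarrow> gd x" using qlim by simp
    show "AE x in lborel. norm (q n x) \<le> C * indicator K1 x" for n using qb by simp
  qed
  then have gd0: "(\<integral>x. gd x \<partial>lborel) = 0" using qint0 by (simp add: LIMSEQ_const_iff)
  have i3: "integrable lborel (\<lambda>x. Dp x * f x)"
  proof (rule integrable_bdd_cpt[OF _ K, of _ "Md * Bf"])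
    show "(\<lambda>x. Dp x * f x) \<in> borel_measurable borel" using Dpm fm by measurable
    fix x show "\<bar>Dp x * f x\<bar> \<le> Md * Bf * indicator K x"
    proof (cases "x \<in> K")
      case True then show ?thesis using Md[of x] fb[of x] Bf0 by (simp add: Dp_def abs_mult mult_mono)
    next
      case False then show ?thesis by (simp add: z\<phi>)
    qed
  qed
  have i4: "integrable lborel (\<lambda>x. \<phi> x * d x)"
  proof (rule integrable_bdd_cpt[OF _ K, of _ "M\<phi> * Bd"])
    show "(\<lambda>x. \<phi> x * d x) \<in> borel_measurable borel" using phim dm by measurable
    fix x show "\<bar>\<phi> x * d x\<bar> \<le> M\<phi> * Bd * indicator K x"
    proof (cases "x \<in> K")
      case True then show ?thesis using M\<phi>[of x] db[of x] Bd0 by (simp add: abs_mult mult_mono)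
    next
      case False then show ?thesis by (simp add: z\<phi>)
    qed
  qed
  have "(\<integral>x. gd x \<partial>lborel) = (\<integral>x. Dp x * f x \<partial>lborel) + (\<integral>x. \<phi> x * d x \<partial>lborel)"
    unfolding gd_def using i3 i4 by simp
  then show ?thesis using gd0 by (simp add: Dp_def mult.commute)
qed

definition cube :: "real \<Rightarrow> ('a::euclidean_space \<Rightarrow> int) \<Rightarrow> 'a set" where
  "cube \<delta> z = {x. \<forall>c\<in>Basis. \<delta> * z c \<le> x \<bullet> c \<and> x \<bullet> c \<le> \<delta> * z c + \<delta>}"

lemma cube_cbox: "cube \<delta> z = cbox (\<Sum>c\<in>Basis. (\<delta> * z c) *\<^sub>R c) (\<Sum>c\<in>Basis. (\<delta> * z c + \<delta>) *\<^sub>R c)"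
  by (auto simp: cube_def mem_box inner_sum_left_Basis)

lemma emeasure_cube: "\<delta> > 0 \<Longrightarrow> emeasure lborel (cube \<delta> z :: 'a::euclidean_space set) = ennreal (\<delta> ^ DIM('a))"
  unfolding cube_cbox by (subst emeasure_lborel_cbox) (auto simp: inner_diff_left inner_sum_left_Basis)

lemma cube_sets[measurable]: "cube \<delta> z \<in> sets lborel"
  unfolding cube_cbox by simp

lemma cube_cover:
  fixes x :: "'a::euclidean_space"
  assumes "\<delta> > 0"
  defines "z \<equiv> (\<lambda>c. if c \<in> Basis then \<lfloor>x \<bullet> c / \<delta>\<rfloor> else 0)"
  shows "x \<in> cube \<delta> z" "cube \<delta> z \<subseteq> cball x (\<delta> * DIM('a))"
proof -
  have lo: "\<delta> * z c \<le> x \<bullet> c" and hi: "x \<bullet> c < \<delta> * z c + \<delta>" if "c \<in> Basis" for c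
  proof -
    have "real_of_int \<lfloor>x \<bullet> c / \<delta>\<rfloor> \<le> x \<bullet> c / \<delta>" by (rule of_int_floor_le)
    then have "\<delta> * real_of_int \<lfloor>x \<bullet> c / \<delta>\<rfloor> \<le> \<delta> * (x \<bullet> c / \<delta>)"
      using assms(1) by (intro mult_left_mono) auto
    then show "\<delta> * z c \<le> x \<bullet> c" using assms(1) that by (simp add: z_def)
    have "x \<bullet> c / \<delta> < real_of_int \<lfloor>x \<bullet> c / \<delta>\<rfloor> + 1" by (rule real_of_int_floor_add_one_gt)
    then show "x \<bullet> c < \<delta> * z c + \<delta>" using assms(1) that by (simp add: z_def field_simps)
  qed
  show "x \<in> cube \<delta> z" using lo hi by (auto simp: cube_def less_imp_le)
  show "cube \<delta> z \<subseteq> cball x (\<delta> * DIM('a))"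
  proof
    fix y assume y: "y \<in> cube \<delta> z"
    have "\<bar>(x - y) \<bullet> c\<bar> \<le> \<delta>" if "c \<in> Basis" for c
      using y lo[OF that] hi[OF that] that by (auto simp: cube_def inner_diff_left abs_le_iff)
    then have s: "(\<Sum>c\<in>Basis. \<bar>(x - y) \<bullet> c\<bar>) \<le> (\<Sum>c\<in>(Basis::'a set). \<delta>)"
      by (intro sum_mono)
    have "norm (x - y) \<le> (\<Sum>c\<in>(Basis::'a set). \<delta>)"
      using norm_le_l1[of "x - y"] s by linarith
    then show "y \<in> cball x (\<delta> * DIM('a))" by (simp add: dist_norm mult.commute)
  qed
qed

lemma many_cubes:
  fixes U :: "'a::euclidean_space set"
  assumes U: "open U" "emeasure lborel U = \<infinity>"
  shows "\<exists>\<delta>>0. \<exists>S. finite S \<and> (\<forall>z\<in>S. \<forall>c. c \<notin> Basis \<longrightarrow> z c = 0) \<and> (\<forall>z\<in>S. cube \<delta> z \<subseteq> U)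
           \<and> A \<le> real (card S) * \<delta> ^ DIM('a)"
proof -
  define dd where "dd k = inverse (real (Suc k))" for k
  have dd0: "dd k > 0" for k by (simp add: dd_def)
  define V where "V k = interior {x. cball x (dd k * DIM('a)) \<subseteq> U}" for k
  have incV: "incseq V"
  proof (rule incseq_SucI)
    fix k
    have "dd (Suc k) \<le> dd k" by (simp add: dd_def field_simps)
    then have "dd (Suc k) * DIM('a) \<le> dd k * DIM('a)" by (simp add: mult_right_mono)
    then have "{x. cball x (dd k * DIM('a)) \<subseteq> U} \<subseteq> {x. cball x (dd (Suc k) * DIM('a)) \<subseteq> U}"
      using cball_subset_cball_iff by fastforce
    then show "V k \<subseteq> V (Suc k)" unfolding V_def by (rule interior_mono)
  qed
  have UV: "(\<Union>k. V k) = U"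
  proof
    show "(\<Union>k. V k) \<subseteq> U"
    proof clarify
      fix x k assume "x \<in> V k"
      then have "cball x (dd k * DIM('a)) \<subseteq> U" unfolding V_def using interior_subset by blast
      moreover have "x \<in> cball x (dd k * DIM('a))" using dd0[of k] by simp
      ultimately show "x \<in> U" by blast
    qed
    show "U \<subseteq> (\<Union>k. V k)"
    proof
      fix x assume "x \<in> U"
      then obtain e where e: "e > 0" "ball x e \<subseteq> U" using U(1) open_contains_ball by blast
      obtain k where k: "inverse (real (Suc k)) < e / 2 / DIM('a)"
        using reals_Archimedean[of "e / 2 / DIM('a)"] e by auto
      have dk: "dd k * DIM('a) < e / 2" using k by (simp add: dd_def field_simps)
      have "ball x (e/2) \<subseteq> {y. cball y (dd k * DIM('a)) \<subseteq> U}"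
      proof clarify
        fix y w assume "y \<in> ball x (e/2)" "w \<in> cball y (dd k * DIM('a))"
        then have "dist x w < e" using dk dist_triangle[of x w y] by (simp add: dist_commute)
        then show "w \<in> U" using e by auto
      qed
      then have "ball x (e/2) \<subseteq> V k" unfolding V_def by (rule interior_maximal) simp
      moreover have "x \<in> ball x (e/2)" using e by simp
      ultimately have "x \<in> V k" by blast
      then show "x \<in> (\<Union>k. V k)" by blast
    qed
  qed
  have "(SUP k. emeasure lborel (V k)) = emeasure lborel (\<Union>k. V k)"
  proof (rule SUP_emeasure_incseq)
    show "range V \<subseteq> sets lborel" unfolding V_def by auto
  qed (rule incV)
  then have sup: "(SUP k. emeasure lborel (V k)) = \<infinity>" using UV U(2) by simp
  have "ennreal (max 0 A) < (SUP k. emeasure lborel (V k))"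
    unfolding sup by simp
  then obtain k where k: "ennreal (max 0 A) < emeasure lborel (V k)"
    unfolding less_SUP_iff by blast
  define \<delta> where "\<delta> = dd k"
  have d0: "\<delta> > 0" by (simp add: \<delta>_def dd0)
  define T where "T = {z. (\<forall>c. c \<notin> Basis \<longrightarrow> z c = 0) \<and> cube \<delta> z \<subseteq> U}"
  have cover: "V k \<subseteq> (\<Union>z\<in>T. cube \<delta> z)"
  proof
    fix x assume "x \<in> V k"
    then have xc: "cball x (\<delta> * DIM('a)) \<subseteq> U" unfolding V_def \<delta>_def using interior_subset by blast
    define z where "z = (\<lambda>c. if c \<in> Basis then \<lfloor>x \<bullet> c / \<delta>\<rfloor> else 0)"
    have "x \<in> cube \<delta> z" "cube \<delta> z \<subseteq> cball x (\<delta> * DIM('a))"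
      using cube_cover[OF d0, of x] by (simp_all add: z_def)
    then have "z \<in> T" "x \<in> cube \<delta> z" using xc by (auto simp: T_def z_def)
    then show "x \<in> (\<Union>z\<in>T. cube \<delta> z)" by blast
  qed
  show ?thesis
  proof (cases "finite T")
    case True
    have "emeasure lborel (V k) \<le> emeasure lborel (\<Union>z\<in>T. cube \<delta> z)"
      using True by (intro emeasure_mono[OF cover] sets.finite_UN) (auto simp: cube_cbox)
    also have "\<dots> \<le> (\<Sum>z\<in>T. emeasure lborel (cube \<delta> z))"
      by (rule emeasure_subadditive_finite[OF True]) (auto simp: cube_cbox)
    also have "\<dots> = ennreal (real (card T) * \<delta> ^ DIM('a))"
      using d0 by (simp add: emeasure_cube ennreal_of_nat_eq_real_of_nat ennreal_mult)
    finally have "ennreal (max 0 A) < ennreal (real (card T) * \<delta> ^ DIM('a))"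
      using k unfolding \<delta>_def by simp
    then have "max 0 A < real (card T) * \<delta> ^ DIM('a)" by (simp add: ennreal_less_iff)
    then have "A \<le> real (card T) * \<delta> ^ DIM('a)" by simp
    then show ?thesis using d0 True by (intro exI[of _ \<delta>] exI[of _ T]) (auto simp: T_def)
  next
    case False
    obtain N :: nat where N: "max 0 A / \<delta> ^ DIM('a) \<le> N" using real_arch_simple by blast
    obtain S where S: "S \<subseteq> T" "finite S" "card S = N" using infinite_arbitrarily_large[OF False] by blast
    have "A \<le> real (card S) * \<delta> ^ DIM('a)"
      using N S(3) d0 by (simp add: field_simps)
    then show ?thesis using d0 S by (intro exI[of _ \<delta>] exI[of _ S]) (auto simp: T_def)
  qed
qed

definition col :: "real \<Rightarrow> 'a::euclidean_space \<Rightarrow> ('a \<Rightarrow> int) \<Rightarrow> 'a \<Rightarrow> bool" where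
  "col \<delta> b z x \<longleftrightarrow> (\<forall>c\<in>Basis. c \<noteq> b \<longrightarrow> \<delta> * z c \<le> x \<bullet> c \<and> x \<bullet> c < \<delta> * z c + \<delta>)"

definition sarg :: "real \<Rightarrow> 'a::euclidean_space \<Rightarrow> ('a \<Rightarrow> int) \<Rightarrow> 'a \<Rightarrow> real" where
  "sarg \<delta> b z x = (x \<bullet> b - \<delta> * z b) / \<delta>"

definition fF :: "real \<Rightarrow> 'a::euclidean_space \<Rightarrow> ('a \<Rightarrow> int) set \<Rightarrow> 'a \<Rightarrow> real" where
  "fF \<delta> b R x = (\<Sum>z\<in>R. if col \<delta> b z x then GG (sarg \<delta> b z x) else 0)"

definition dF :: "real \<Rightarrow> 'a::euclidean_space \<Rightarrow> ('a \<Rightarrow> int) set \<Rightarrow> 'a \<Rightarrow> real" where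
  "dF \<delta> b R x = (\<Sum>z\<in>R. if col \<delta> b z x then GD (sarg \<delta> b z x) / \<delta> else 0)"

lemma GG_bound: "\<bar>GG s\<bar> \<le> 1" by (simp add: GG_def)

lemma GD_nonneg: "0 \<le> GD s"
  unfolding GD_def clamp01_def by (intro mult_nonneg_nonneg sin_ge_zero) auto

lemma GD_bound: "GD s \<le> pi"
  unfolding GD_def using sin_le_one[of "pi * clamp01 s"] by (simp add: mult_left_le)

lemma GD_zero: "s \<le> 0 \<or> 1 \<le> s \<Longrightarrow> GD s = 0"
  unfolding GD_def clamp01_def by auto

lemma GG_cont: "continuous_on UNIV GG"
  using GG_deriv by (metis DERIV_isCont continuous_at_imp_continuous_on)

lemma GD_cont: "continuous_on UNIV GD"
  unfolding GD_def clamp01_def by (intro continuous_intros)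

lemma GG_meas[measurable]: "GG \<in> borel_measurable borel"
  by (rule borel_measurable_continuous_onI[OF GG_cont])

lemma GD_meas[measurable]: "GD \<in> borel_measurable borel"
  by (rule borel_measurable_continuous_onI[OF GD_cont])

lemma sum_single_bound:
  fixes h :: "'b \<Rightarrow> real"
  assumes "finite R" "\<And>z z'. z \<in> R \<Longrightarrow> z' \<in> R \<Longrightarrow> P z \<Longrightarrow> P z' \<Longrightarrow> z = z'"
    and "\<And>z. z \<in> R \<Longrightarrow> P z \<Longrightarrow> lo \<le> h z \<and> h z \<le> hi" "lo \<le> 0" "0 \<le> hi"
  shows "lo \<le> (\<Sum>z\<in>R. if P z then h z else 0) \<and> (\<Sum>z\<in>R. if P z then h z else 0) \<le> hi"
proof -
  have eq: "(\<Sum>z\<in>R. if P z then h z else 0) = (\<Sum>z\<in>{z\<in>R. P z}. h z)"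
    using assms(1) by (simp add: sum.inter_filter)
  show ?thesis
  proof (cases "{z\<in>R. P z} = {}")
    case True then show ?thesis using eq assms by simp
  next
    case False
    then obtain z0 where z0: "z0 \<in> R" "P z0" by blast
    then have "{z\<in>R. P z} = {z0}" using assms(2) by blast
    then show ?thesis using eq assms(3)[OF z0] by simp
  qed
qed

lemma GD_has_integral: "(GD has_integral 2) {0..1}"
proof -
  have "(GD has_integral (GG 1 - GG 0)) {0..1}"
  proof (rule fundamental_theorem_of_calculus)
    fix x :: real assume "x \<in> {0..1}"
    show "(GG has_vector_derivative GD x) (at x within {0..1})"
      using GG_deriv[of x] by (simp add: has_real_derivative_iff_has_vector_derivative[symmetric] has_field_derivative_at_within)
  qed simp
  moreover have "GG 1 - GG 0 = 2" by (simp add: GG_def clamp01_def)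
  ultimately show ?thesis by simp
qed

lemma GD_nn_integral: "(\<integral>\<^sup>+s. ennreal (GD s) \<partial>lborel) = 2"
proof -
  have "(\<integral>\<^sup>+s. ennreal (indicator {0..1} s * GD s) \<partial>lborel) = ennreal 2"
    by (rule nn_integral_has_integral_lebesgue[OF _ GD_has_integral]) (rule GD_nonneg)
  moreover have "indicator {0..1} s * GD s = GD s" for s :: real
    using GD_zero[of s] by (cases "s \<in> {0..1}") auto
  ultimately show ?thesis by simp
qed

lemma GD_scaled_integral:
  assumes "\<delta> > 0"
  shows "(\<integral>\<^sup>+t. ennreal (GD ((t - a) / \<delta>) / \<delta>) \<partial>lborel) = 2"
proof -
  have "(\<integral>\<^sup>+t. ennreal (GD ((t - a) / \<delta>) / \<delta>) \<partial>lborel)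
      = ennreal \<bar>\<delta>\<bar> * (\<integral>\<^sup>+s. ennreal (GD ((a + \<delta> * s - a) / \<delta>) / \<delta>) \<partial>lborel)"
    by (rule nn_integral_real_affine) (use assms in auto)
  also have "(\<lambda>s. ennreal (GD ((a + \<delta> * s - a) / \<delta>) / \<delta>)) = (\<lambda>s. ennreal (1 / \<delta>) * ennreal (GD s))"
    using assms by (auto simp: ennreal_mult[symmetric] GD_nonneg)
  also have "(\<integral>\<^sup>+s. ennreal (1 / \<delta>) * ennreal (GD s) \<partial>lborel) = ennreal (1 / \<delta>) * 2"
    by (subst nn_integral_cmult) (auto simp: GD_nn_integral)
  also have "ennreal \<bar>\<delta>\<bar> * (ennreal (1 / \<delta>) * 2) = 2"
    using assms by (simp add: mult.assoc[symmetric] ennreal_mult[symmetric])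
  finally show ?thesis .
qed

context
  fixes \<delta> :: real and b :: "'a::euclidean_space" and R :: "('a \<Rightarrow> int) set"
  assumes d0: "\<delta> > 0" and bB: "b \<in> Basis" and finR: "finite R"
    and ext: "\<forall>z\<in>R. \<forall>c. c \<notin> Basis \<longrightarrow> z c = 0"
    and injR: "inj_on (\<lambda>z. z(b := 0)) R"
begin

lemma col_unique:
  assumes "z \<in> R" "z' \<in> R" "col \<delta> b z x" "col \<delta> b z' x"
  shows "z = z'"
proof -
  have "z(b := 0) = z'(b := 0)"
  proof
    fix c show "(z(b := 0)) c = (z'(b := 0)) c"
    proof (cases "c = b")
      case True then show ?thesis by simp
    next
      case False
      show ?thesis
      proof (cases "c \<in> Basis")
        case cB: True
        have a: "\<delta> * z c \<le> x \<bullet> c" "x \<bullet> c < \<delta> * z c + \<delta>"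
          using assms(3) cB False by (auto simp: col_def)
        have b: "\<delta> * z' c \<le> x \<bullet> c" "x \<bullet> c < \<delta> * z' c + \<delta>"
          using assms(4) cB False by (auto simp: col_def)
        have "\<delta> * z c < \<delta> * (z' c + 1)" using a b by (simp add: algebra_simps)
        then have "real_of_int (z c) < z' c + 1" using d0 by (simp add: mult_less_cancel_left_pos)
        then have l: "z c \<le> z' c" by linarith
        have "\<delta> * z' c < \<delta> * (z c + 1)" using a b by (simp add: algebra_simps)
        then have "real_of_int (z' c) < z c + 1" using d0 by (simp add: mult_less_cancel_left_pos)
        then have "z' c \<le> z c" by linarith
        then show ?thesis using l False by simp
      next
        case False
        then show ?thesis using ext[rule_format, OF assms(1) False] ext[rule_format, OF assms(2) False] by simp
      qed
    qed
  qed
  then show ?thesis using injR assms(1,2) by (auto dest: inj_onD)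
qed

lemma fF_bound: "\<bar>fF \<delta> b R x\<bar> \<le> 1"
proof -
  have "-1 \<le> fF \<delta> b R x \<and> fF \<delta> b R x \<le> 1"
    unfolding fF_def
    by (rule sum_single_bound[OF finR]) (use col_unique GG_bound in \<open>auto simp: abs_le_iff\<close>)
  then show ?thesis by linarith
qed

lemma dF_bound: "0 \<le> dF \<delta> b R x \<and> dF \<delta> b R x \<le> pi / \<delta>"
  unfolding dF_def
  by (rule sum_single_bound[OF finR]) (use col_unique GD_nonneg GD_bound d0 in \<open>auto intro: divide_right_mono\<close>)

lemma col_shift: "col \<delta> b z (x + s *\<^sub>R b) = col \<delta> b z x"
  unfolding col_def using bB by (auto simp: inner_add_left inner_Basis)

lemma sarg_shift: "sarg \<delta> b z (x + s *\<^sub>R b) = sarg \<delta> b z x + s / \<delta>"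
  unfolding sarg_def using bB d0 by (simp add: inner_add_left field_simps)

lemma fF_deriv: "((\<lambda>s. fF \<delta> b R (x + s *\<^sub>R b)) has_real_derivative dF \<delta> b R (x + t *\<^sub>R b)) (at t)"
proof -
  have e: "(\<lambda>s. fF \<delta> b R (x + s *\<^sub>R b)) = (\<lambda>s. \<Sum>z\<in>R. if col \<delta> b z x then GG (sarg \<delta> b z x + s / \<delta>) else 0)"
    unfolding fF_def col_shift sarg_shift by simp
  have d: "dF \<delta> b R (x + t *\<^sub>R b) = (\<Sum>z\<in>R. if col \<delta> b z x then GD (sarg \<delta> b z x + t / \<delta>) / \<delta> else 0)"
    unfolding dF_def col_shift sarg_shift by simp
  have trm: "((\<lambda>s. if col \<delta> b z x then GG (sarg \<delta> b z x + s / \<delta>) else 0) has_real_derivative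
      (if col \<delta> b z x then GD (sarg \<delta> b z x + t / \<delta>) / \<delta> else 0)) (at t)" for z
  proof (cases "col \<delta> b z x")
    case True
    have i: "((\<lambda>s. sarg \<delta> b z x + s / \<delta>) has_real_derivative 1 / \<delta>) (at t)"
      using d0 by (auto intro!: derivative_eq_intros)
    have "((\<lambda>s. GG (sarg \<delta> b z x + s / \<delta>)) has_real_derivative GD (sarg \<delta> b z x + t / \<delta>) * (1 / \<delta>)) (at t)"
      by (rule DERIV_chain'[OF i GG_deriv])
    then show ?thesis using True by simp
  next
    case False then show ?thesis by simp
  qed
  show ?thesis unfolding e d by (rule DERIV_sum) (rule trm)
qed

lemma col_meas[measurable]: "Measurable.pred borel (col \<delta> b z)"
  unfolding col_def by measurable

lemma fF_meas[measurable]: "fF \<delta> b R \<in> borel_measurable borel"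
  unfolding fF_def sarg_def by measurable

lemma dF_meas[measurable]: "dF \<delta> b R \<in> borel_measurable borel"
  unfolding dF_def sarg_def by measurable

lemma dF_support:
  assumes "\<forall>z\<in>R. x \<notin> cube \<delta> z"
  shows "dF \<delta> b R x = 0"
  unfolding dF_def
proof (rule sum.neutral, rule ballI)
  fix z assume z: "z \<in> R"
  show "(if col \<delta> b z x then GD (sarg \<delta> b z x) / \<delta> else 0) = 0"
  proof (cases "col \<delta> b z x")
    case True
    have "\<not> (0 < sarg \<delta> b z x \<and> sarg \<delta> b z x < 1)"
    proof
      assume "0 < sarg \<delta> b z x \<and> sarg \<delta> b z x < 1"
      then have "\<delta> * z b < x \<bullet> b \<and> x \<bullet> b < \<delta> * z b + \<delta>" using d0 by (auto simp: sarg_def field_simps)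
      then have "x \<in> cube \<delta> z" using True by (auto simp: cube_def col_def)
      then show False using assms z by blast
    qed
    then have "GD (sarg \<delta> b z x) = 0" by (intro GD_zero) linarith
    then show ?thesis using True by simp
  next
    case False then show ?thesis by simp
  qed
qed


lemma term_integral:
  "(\<integral>\<^sup>+x. ennreal (if col \<delta> b z x then GD (sarg \<delta> b z x) / \<delta> else 0) \<partial>lborel)
     = ennreal (2 * \<delta> ^ (DIM('a) - 1))"
proof -
  define h where "h c t = (if c = b then ennreal (GD ((t - \<delta> * z b) / \<delta>) / \<delta>)
      else indicator {\<delta> * z c ..< \<delta> * z c + \<delta>} t)" for c t
  have hm: "h c \<in> borel_measurable borel" for c unfolding h_def by measurable
  have eqx: "ennreal (if col \<delta> b z x then GD (sarg \<delta> b z x) / \<delta> else 0) = (\<Prod>c\<in>Basis. h c (x \<bullet> c))" for x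
  proof -
    have "(\<Prod>c\<in>Basis. h c (x \<bullet> c)) = h b (x \<bullet> b) * (\<Prod>c\<in>Basis - {b}. h c (x \<bullet> c))"
      by (rule prod.remove[OF finite_Basis bB])
    also have "(\<Prod>c\<in>Basis - {b}. h c (x \<bullet> c)) = (if col \<delta> b z x then 1 else 0)"
    proof (cases "col \<delta> b z x")
      case True
      then have "(\<Prod>c\<in>Basis - {b}. h c (x \<bullet> c)) = 1"
        by (intro prod.neutral) (auto simp: h_def col_def)
      then show ?thesis using True by simp
    next
      case False
      then obtain c where c: "c \<in> Basis" "c \<noteq> b" "\<not> (\<delta> * z c \<le> x \<bullet> c \<and> x \<bullet> c < \<delta> * z c + \<delta>)"
        unfolding col_def by blast
      then have "h c (x \<bullet> c) = 0" by (auto simp: h_def)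
      then have "(\<Prod>c\<in>Basis - {b}. h c (x \<bullet> c)) = 0"
        using c by (intro prod_zero) auto
      then show ?thesis using False by simp
    qed
    finally show ?thesis by (simp add: h_def sarg_def)
  qed
  have "(\<integral>\<^sup>+x. ennreal (if col \<delta> b z x then GD (sarg \<delta> b z x) / \<delta> else 0) \<partial>lborel)
      = (\<integral>\<^sup>+x. (\<Prod>c\<in>Basis. h c (x \<bullet> c)) \<partial>lborel)" by (simp only: eqx)
  also have "\<dots> = (\<Prod>c\<in>Basis. (\<integral>\<^sup>+t. h c t \<partial>lborel))"
    by (rule nn_integral_lborel_prod) (use hm in auto)
  also have "\<dots> = (\<integral>\<^sup>+t. h b t \<partial>lborel) * (\<Prod>c\<in>Basis - {b}. (\<integral>\<^sup>+t. h c t \<partial>lborel))"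
    by (rule prod.remove[OF finite_Basis bB])
  also have "(\<integral>\<^sup>+t. h b t \<partial>lborel) = 2"
    unfolding h_def using GD_scaled_integral[OF d0] by simp
  also have "(\<Prod>c\<in>Basis - {b}. (\<integral>\<^sup>+t. h c t \<partial>lborel)) = (\<Prod>c\<in>Basis - {b}. ennreal \<delta>)"
  proof (rule prod.cong[OF refl])
    fix c assume "c \<in> Basis - {b}"
    then have "(\<integral>\<^sup>+t. h c t \<partial>lborel) = emeasure lborel {\<delta> * z c ..< \<delta> * z c + \<delta>}"
      by (simp add: h_def)
    also have "\<dots> = ennreal \<delta>" using d0 by simp
    finally show "(\<integral>\<^sup>+t. h c t \<partial>lborel) = ennreal \<delta>" .
  qed
  also have "\<dots> = ennreal (\<delta> ^ (DIM('a) - 1))"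
    using d0 bB by (simp add: prod_ennreal card_Diff_singleton ennreal_power)
  finally show ?thesis using d0 by (simp add: ennreal_mult)
qed

lemma dF_integral:
  "(\<integral>\<^sup>+x. ennreal (dF \<delta> b R x) \<partial>lborel) = ennreal (2 * \<delta> ^ (DIM('a) - 1) * card R)"
proof -
  have nn: "0 \<le> (if col \<delta> b z x then GD (sarg \<delta> b z x) / \<delta> else 0)" for z x
    using GD_nonneg d0 by simp
  have "(\<lambda>x. ennreal (dF \<delta> b R x)) = (\<lambda>x. \<Sum>z\<in>R. ennreal (if col \<delta> b z x then GD (sarg \<delta> b z x) / \<delta> else 0))"
    unfolding dF_def using nn by (subst sum_ennreal) auto
  then have "(\<integral>\<^sup>+x. ennreal (dF \<delta> b R x) \<partial>lborel)
      = (\<Sum>z\<in>R. (\<integral>\<^sup>+x. ennreal (if col \<delta> b z x then GD (sarg \<delta> b z x) / \<delta> else 0) \<partial>lborel))"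
    by (simp only:) (rule nn_integral_sum, unfold sarg_def, measurable)
  also have "\<dots> = (\<Sum>z\<in>R. ennreal (2 * \<delta> ^ (DIM('a) - 1)))" by (simp only: term_integral)
  also have "\<dots> = ennreal (2 * \<delta> ^ (DIM('a) - 1) * card R)"
    using d0 by (simp add: ennreal_of_nat_eq_real_of_nat ennreal_mult[symmetric] mult.commute)
  finally show ?thesis .
qed

end

lemma anex_lower:
  fixes U :: "'a::euclidean_space set"
  assumes U: "open U" and d0: "\<delta> > 0" and bB: "b \<in> Basis" and finR: "finite R"
    and ext: "\<forall>z\<in>R. \<forall>c. c \<notin> Basis \<longrightarrow> z c = 0"
    and injR: "inj_on (\<lambda>z. z(b := 0)) R"
    and cubes: "\<And>z. z \<in> R \<Longrightarrow> cube \<delta> z \<subseteq> U"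
  shows "ereal (2 * \<delta> ^ (DIM('a) - 1) * card R) \<le> anexometer U"
proof -
  note ctx = d0 bB finR ext injR
  define V where "V = 2 * \<delta> ^ (DIM('a) - 1) * card R"
  define u where "u x = fF \<delta> b R x *\<^sub>R b" for x
  define d where "d = dF \<delta> b R"
  define M where "M = restrict_space lborel U"
  define \<mu>p where "\<mu>p = density M (\<lambda>x. ennreal (d x))"
  define \<mu>n where "\<mu>n = density M (\<lambda>x. ennreal 0)"
  have Ub: "U \<in> sets borel" using U by simp
  have dout: "d x = 0" if "x \<notin> U" for x
    unfolding d_def by (rule dF_support[of \<delta> b R, OF ctx]) (use cubes that in blast)
  have dm: "d \<in> borel_measurable borel" unfolding d_def by (rule dF_meas[of \<delta> b R, OF ctx])
  have fm: "fF \<delta> b R \<in> borel_measurable borel" by (rule fF_meas[of \<delta> b R, OF ctx])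
  have spM: "space M = U" by (simp add: M_def space_restrict_space)
  have setsM: "sets M = sets (restrict_space borel U)" unfolding M_def by (rule sets_restrict_space_cong) simp
  have UM: "U \<in> sets M" using Ub by (simp add: M_def sets_restrict_space_iff)
  have dmM: "d \<in> borel_measurable M" unfolding M_def using dm by (simp add: measurable_restrict_space1)
  have intd: "(\<integral>\<^sup>+x. ennreal (d x) \<partial>lborel) = ennreal V"
    unfolding d_def V_def by (rule dF_integral[of \<delta> b R, OF ctx])
  have emp: "emeasure \<mu>p U = ennreal V"
  proof -
    have "emeasure \<mu>p U = (\<integral>\<^sup>+x. ennreal (d x) * indicator U x \<partial>M)"
      unfolding \<mu>p_def using dmM UM by (simp add: emeasure_density)
    also have "\<dots> = (\<integral>\<^sup>+x. ennreal (d x) * indicator U x * indicator U x \<partial>lborel)"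
      unfolding M_def using Ub by (simp add: nn_integral_restrict_space)
    also have "(\<lambda>x. ennreal (d x) * indicator U x * indicator U x) = (\<lambda>x. ennreal (d x))"
      using dout by (auto simp: fun_eq_iff split: split_indicator)
    finally show ?thesis using intd by simp
  qed
  have emn: "emeasure \<mu>n U = 0"
    unfolding \<mu>n_def using UM by (simp add: emeasure_density)
  have fin_p: "fin_borel_on U \<mu>p"
    unfolding fin_borel_on_def
  proof
    show "sets \<mu>p = sets (restrict_space borel U)" unfolding \<mu>p_def using setsM by simp
    show "finite_measure \<mu>p"
      by (rule finite_measureI) (use emp spM in \<open>simp add: \<mu>p_def\<close>)
  qed
  have fin_n: "fin_borel_on U \<mu>n"
    unfolding fin_borel_on_def
  proof
    show "sets \<mu>n = sets (restrict_space borel U)" unfolding \<mu>n_def using setsM by simp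
    show "finite_measure \<mu>n"
      by (rule finite_measureI) (use emn spM in \<open>simp add: \<mu>n_def\<close>)
  qed
  have mp: "measure \<mu>p U = V" using emp V_def d0 by (simp add: measure_def)
  have mn: "measure \<mu>n U = 0" using emn by (simp add: measure_def)
  have unorm: "norm (u x) \<le> 1" for x
    using fF_bound[of \<delta> b R, OF ctx, of x] bB by (simp add: u_def)
  have um: "u \<in> borel_measurable (restrict_space lebesgue U)"
  proof -
    have "u \<in> borel_measurable borel" unfolding u_def using fm by measurable
    then have "u \<in> borel_measurable lebesgue" by (simp add: measurable_completion)
    then show ?thesis by (rule measurable_restrict_space1)
  qed
  have test: "(LINT x:U|lebesgue. frechet_derivative \<phi> (at x) (u x))
          = - ((LINT x|\<mu>p. \<phi> x) - (LINT x|\<mu>n. \<phi> x))" if phi: "test_fun U \<phi>" for \<phi>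
  proof -
    have Ksub: "closure {x. \<phi> x \<noteq> 0} \<subseteq> U" using phi by (simp add: test_fun_def)
    have phim: "\<phi> \<in> borel_measurable borel" by (rule borel_measurable_continuous_onI[OF test_fun_cont[OF phi]])
    have Dpm: "(\<lambda>x. frechet_derivative \<phi> (at x) b) \<in> borel_measurable borel"
      by (rule borel_measurable_continuous_onI[OF test_fun_dcont[OF phi]])
    have eq1: "indicator U x *\<^sub>R frechet_derivative \<phi> (at x) (u x) = fF \<delta> b R x * frechet_derivative \<phi> (at x) b" for x
    proof (cases "x \<in> U")
      case True
      have "linear (frechet_derivative \<phi> (at x))" using test_fun_diff[OF phi] has_derivative_linear by blast
      then show ?thesis using True by (simp add: u_def linear_scale)
    next
      case False
      then have "x \<notin> closure {x. \<phi> x \<noteq> 0}" using Ksub by blast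
      then show ?thesis using False test_fun_zero(2)[OF phi] by simp
    qed
    have "(LINT x:U|lebesgue. frechet_derivative \<phi> (at x) (u x))
        = (\<integral>x. fF \<delta> b R x * frechet_derivative \<phi> (at x) b \<partial>lebesgue)"
      unfolding set_lebesgue_integral_def eq1 ..
    also have "\<dots> = (\<integral>x. fF \<delta> b R x * frechet_derivative \<phi> (at x) b \<partial>lborel)"
      by (rule integral_completion) (use fm Dpm in measurable)
    also have "\<dots> = - (\<integral>x. \<phi> x * d x \<partial>lborel)"
      unfolding d_def
      by (rule ibp[OF phi _ fm dF_meas[of \<delta> b R, OF ctx] fF_bound[of \<delta> b R, OF ctx]]) (use bB dF_bound[of \<delta> b R, OF ctx] fF_deriv[of \<delta> b R, OF ctx] in \<open>auto simp: abs_le_iff\<close>)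
    finally have L: "(LINT x:U|lebesgue. frechet_derivative \<phi> (at x) (u x)) = - (\<integral>x. \<phi> x * d x \<partial>lborel)" .
    have phiM: "\<phi> \<in> borel_measurable M" unfolding M_def using phim by (simp add: measurable_restrict_space1)
    have "(LINT x|\<mu>p. \<phi> x) = (\<integral>x. d x *\<^sub>R \<phi> x \<partial>M)"
      unfolding \<mu>p_def by (rule integral_density[OF phiM dmM]) (use dF_bound[of \<delta> b R, OF ctx] in \<open>simp add: d_def\<close>)
    also have "\<dots> = (\<integral>x. indicator U x *\<^sub>R (d x *\<^sub>R \<phi> x) \<partial>lborel)"
      unfolding M_def by (rule integral_restrict_space) (use Ub in simp)
    also have "(\<lambda>x. indicator U x *\<^sub>R (d x *\<^sub>R \<phi> x)) = (\<lambda>x. \<phi> x * d x)"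
      using dout by (auto simp: fun_eq_iff split: split_indicator)
    finally have P: "(LINT x|\<mu>p. \<phi> x) = (\<integral>x. \<phi> x * d x \<partial>lborel)" .
    have "(LINT x|\<mu>n. \<phi> x) = (\<integral>x. 0 *\<^sub>R \<phi> x \<partial>M)"
      unfolding \<mu>n_def by (rule integral_density[OF phiM]) auto
    then have N: "(LINT x|\<mu>n. \<phi> x) = 0" by simp
    show ?thesis using L P N by simp
  qed
  have dmeas: "div_measure U u \<mu>p \<mu>n"
    unfolding div_measure_def using um unorm fin_p fin_n test by (auto intro!: exI[of _ 1])
  have "ereal (measure \<mu>p U - measure \<mu>n U) \<in> {ereal (measure \<mu>p U - measure \<mu>n U) | u \<mu>p \<mu>n.
       div_measure U u \<mu>p \<mu>n \<and> (AE x in restrict_space lebesgue U. norm (u x) \<le> 1)}"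
    using dmeas unorm by blast
  then have "ereal (measure \<mu>p U - measure \<mu>n U) \<le> anexometer U"
    unfolding anexometer_def by (rule Sup_upper)
  then show ?thesis using mp mn by (simp add: V_def)
qed

theorem corollary3p9:
  fixes U :: "'a::euclidean_space set"
  assumes "DIM('a) \<ge> 2"
    and "open U"
    and "emeasure lebesgue U = \<infinity>"
  shows "anexometer U = \<infinity>"
proof (rule ereal_top)
  fix B :: real
  define m where "m = DIM('a)"
  have m2: "m \<ge> 2" using assms(1) by (simp add: m_def)
  have Us: "U \<in> sets lborel" using assms(2) by simp
  have eq: "emeasure lebesgue U = emeasure lborel U"
  proof -
    have "emeasure (completion lborel) U = emeasure lborel (main_part lborel U)"
      by (rule emeasure_completion) (rule sets_completionI_sets[OF Us])
    also have "main_part lborel U = U" by (rule main_part[OF Us])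
    finally show ?thesis .
  qed
  have Ulb: "emeasure lborel U = \<infinity>" using assms(3) unfolding eq .
  define L where "L = LWK m"
  have L0: "L > 0" unfolding L_def by (rule LWK_pos)
  define M0 where "M0 = max 1 B"
  define A where "A = max 1 (L * M0 ^ m)"
  have "\<exists>\<delta>>0. \<exists>S. finite S \<and> (\<forall>z\<in>S. \<forall>c. c \<notin> Basis \<longrightarrow> z c = 0) \<and> (\<forall>z\<in>S. cube \<delta> z \<subseteq> U)
           \<and> A \<le> real (card S) * \<delta> ^ m"
    unfolding m_def by (rule many_cubes[OF assms(2) Ulb])
  then obtain \<delta> S where d0: "\<delta> > 0" and finS: "finite S" and extS: "\<forall>z\<in>S. \<forall>c. c \<notin> Basis \<longrightarrow> z c = 0"
    and cubS: "\<forall>z\<in>S. cube \<delta> z \<subseteq> U" and AS: "A \<le> real (card S) * \<delta> ^ m"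
    by (elim exE conjE)
  define pr where "pr c = (\<lambda>z::'a \<Rightarrow> int. z(c := 0)) ` S" for c
  define P where "P = Max ((\<lambda>c. card (pr c)) ` Basis)"
  have Pge: "card (pr c) \<le> P" if "c \<in> Basis" for c
    unfolding P_def using that by (intro Max_ge) auto
  obtain b where bB: "b \<in> Basis" and Pb: "card (pr b) = P"
  proof -
    have "P \<in> (\<lambda>c. card (pr c)) ` Basis" unfolding P_def by (intro Max_in) auto
    then show ?thesis using that by blast
  qed
  have LW1: "real (card S) ^ (m - 1) \<le> L * real P ^ m"
    unfolding L_def m_def
    by (rule LW) (use assms(1) finS extS Pge in \<open>auto simp: pr_def\<close>)
  define rep where "rep w = (SOME z. z \<in> S \<and> z(b := 0) = w)" for w
  have rep: "rep w \<in> S \<and> (rep w)(b := 0) = w" if "w \<in> pr b" for w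
  proof -
    have "\<exists>z. z \<in> S \<and> z(b := 0) = w" using that by (auto simp: pr_def)
    then show ?thesis unfolding rep_def by (rule someI_ex)
  qed
  define R where "R = rep ` pr b"
  have RS: "R \<subseteq> S" using rep by (auto simp: R_def)
  have finR: "finite R" using RS finS finite_subset by blast
  have inj_rep: "inj_on rep (pr b)"
  proof (rule inj_onI)
    fix w w' assume w: "w \<in> pr b" "w' \<in> pr b" and e: "rep w = rep w'"
    have "w = (rep w)(b := 0)" using rep[OF w(1)] by simp
    also have "\<dots> = (rep w')(b := 0)" using e by simp
    also have "\<dots> = w'" using rep[OF w(2)] by simp
    finally show "w = w'" .
  qed
  have cardR: "card R = P" unfolding R_def using card_image[OF inj_rep] Pb by simp
  have injR: "inj_on (\<lambda>z. z(b := 0)) R"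
  proof (rule inj_onI)
    fix z z' assume "z \<in> R" "z' \<in> R" and e: "z(b := 0) = z'(b := 0)"
    then obtain w w' where w: "w \<in> pr b" "z = rep w" "w' \<in> pr b" "z' = rep w'" by (auto simp: R_def)
    have "w = (rep w)(b := 0)" using rep[OF w(1)] by simp
    also have "\<dots> = z'(b := 0)" using e w(2) by simp
    also have "\<dots> = w'" using rep[OF w(3)] w(4) by simp
    finally have "w = w'" .
    then show "z = z'" using w by simp
  qed
  have low: "ereal (2 * \<delta> ^ (DIM('a) - 1) * card R) \<le> anexometer U"
    by (rule anex_lower[OF assms(2) d0 bB finR _ injR]) (use RS extS cubS in auto)
  define X where "X = 2 * \<delta> ^ (m - 1) * real P"
  have X0: "0 \<le> X" using d0 by (simp add: X_def)
  have A1: "1 \<le> A" by (simp add: A_def)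
  have "L * M0 ^ m \<le> A" by (simp add: A_def)
  also have "A \<le> A ^ (m - 1)" using power_increasing[of 1 "m - 1" A] A1 m2 by simp
  also have "\<dots> \<le> (real (card S) * \<delta> ^ m) ^ (m - 1)" using AS A1 by (intro power_mono) auto
  also have "\<dots> = real (card S) ^ (m - 1) * \<delta> ^ (m * (m - 1))" by (simp add: power_mult_distrib power_mult)
  also have "\<dots> \<le> L * real P ^ m * \<delta> ^ (m * (m - 1))" using LW1 d0 by (intro mult_right_mono) auto
  also have "\<dots> \<le> L * X ^ m"
  proof -
    define Y where "Y = \<delta> ^ (m * (m - 1)) * real P ^ m"
    have Y0: "0 \<le> Y" using d0 by (simp add: Y_def)
    have "X ^ m = 2 ^ m * (\<delta> ^ (m - 1)) ^ m * real P ^ m" by (simp add: X_def power_mult_distrib)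
    also have "(\<delta> ^ (m - 1)) ^ m = \<delta> ^ (m * (m - 1))" by (simp add: power_mult[symmetric] mult.commute)
    finally have XY: "X ^ m = 2 ^ m * Y" by (simp add: Y_def mult.assoc)
    have "Y \<le> 2 ^ m * Y" using Y0 by (simp add: mult_le_cancel_right1)
    then have "L * Y \<le> L * X ^ m" using L0 XY by simp
    then show ?thesis by (simp add: Y_def mult.assoc mult.commute mult.left_commute)
  qed
  finally have "L * M0 ^ m \<le> L * X ^ m" .
  then have "M0 ^ m \<le> X ^ m" using L0 by simp
  then have "M0 \<le> X"
  proof -
    obtain k where k: "m = Suc k" using m2 by (cases m) auto
    assume "M0 ^ m \<le> X ^ m"
    then show "M0 \<le> X" using power_le_imp_le_base[of M0 k X] k X0 by simp
  qed
  then have "ereal B \<le> ereal X" by (simp add: M0_def)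
  also have "ereal X \<le> anexometer U" using low cardR by (simp add: X_def m_def)
  finally show "ereal B \<le> anexometer U" .
qed

end
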